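(* For every positive integer $M$ there exists a temporal DAG whose underlying digraph is a transitive tournament, in which every temporal antichain has size at most $1$, but every temporal path cover and every temporally disjoint path cover has size at least $M$. In particular, temporal DAGs satisfy neither the Dilworth property nor the TD-Dilworth property, and the ratio between the minimum size of a temporal (disjoint) path cover and the maximum size of a temporal antichain is unbounded.
   Context: A temporal digraph is a pair $\mathcal D=(D,\lambda)$, where $D=(V,A)$ is a finite digraph (the underlying digraph) and $\lambda:A\to 2^{\{1,\dots,t_{\max}\}}$ assigns to each arc the set of time-steps (labels) at which it is active. A temporal DAG is a temporal digraph whose underlying digraph is acyclic. A temporal path is a sequence $(v_1,v_2,t_1),\dots,(v_{k-1},v_k,t_{k-1})$ with $v_1,\dots,v_k$ pairwise distinct, $\overrightarrow{v_iv_{i+1}}\in A$, $t_i\in\lambda(\overrightarrow{v_iv_{i+1}})$, and $t_1<\dots<t_{k-1}$; a single vertex is also a temporal path. It goes from $v_1$ to $v_k$. A path occupies $v_i$ ($1<i<k$) at every time in $\{t_{i-1},\dots,t_i\}$, $v_1$ at time $t_1$ and $v_k$ at time $t_{k-1}$; two temporal paths are temporally disjoint if they never occupy the same vertex at the same time. A temporal path cover is a collection of temporal paths whose vertex sets cover $V$; a temporally disjoint path cover is one whose paths are pairwise temporally disjoint. Two vertices are temporally connected if there is a temporal path from one to the other. A temporal antichain is a set of pairwise not temporally connected vertices. A class of temporal digraphs has the Dilworth property (resp. TD-Dilworth property) if for each member the minimum size of a temporal path cover (resp. temporally disjoint path cover) equals the maximum size of a temporal antichain. *)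

theory Defs
  imports Main
begin

definition temporal_digraph :: "'a set \<Rightarrow> ('a \<times> 'a) set \<Rightarrow> ('a \<times> 'a \<Rightarrow> nat set) \<Rightarrow> bool" where
  "temporal_digraph V A lam \<longleftrightarrow> finite V \<and> A \<subseteq> V \<times> V \<and>
     (\<exists>tmax::nat. \<forall>a\<in>A. lam a \<subseteq> {1..tmax})"

definition temporal_DAG :: "'a set \<Rightarrow> ('a \<times> 'a) set \<Rightarrow> ('a \<times> 'a \<Rightarrow> nat set) \<Rightarrow> bool" where
  "temporal_DAG V A lam \<longleftrightarrow> temporal_digraph V A lam \<and> acyclic A"

definition transitive_tournament :: "'a set \<Rightarrow> ('a \<times> 'a) set \<Rightarrow> bool" where
  "transitive_tournament V A \<longleftrightarrow> A \<subseteq> V \<times> V \<and> (\<forall>v. (v, v) \<notin> A) \<and>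
     (\<forall>u\<in>V. \<forall>v\<in>V. u \<noteq> v \<longrightarrow> ((u, v) \<in> A \<longleftrightarrow> (v, u) \<notin> A)) \<and> trans A"

definition temporal_path :: "'a set \<Rightarrow> ('a \<times> 'a) set \<Rightarrow> ('a \<times> 'a \<Rightarrow> nat set) \<Rightarrow> 'a list \<times> nat list \<Rightarrow> bool" where
  "temporal_path V A lam p \<longleftrightarrow> (case p of (vs, ts) \<Rightarrow>
     vs \<noteq> [] \<and> set vs \<subseteq> V \<and> distinct vs \<and> length ts + 1 = length vs \<and>
     (\<forall>i < length ts. (vs ! i, vs ! Suc i) \<in> A \<and> ts ! i \<in> lam (vs ! i, vs ! Suc i)) \<and>
     sorted_wrt (<) ts)"

definition path_vertices :: "'a list \<times> nat list \<Rightarrow> 'a set" where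
  "path_vertices p = set (fst p)"

definition temporally_connected :: "'a set \<Rightarrow> ('a \<times> 'a) set \<Rightarrow> ('a \<times> 'a \<Rightarrow> nat set) \<Rightarrow> 'a \<Rightarrow> 'a \<Rightarrow> bool" where
  "temporally_connected V A lam u v \<longleftrightarrow>
     (\<exists>p. temporal_path V A lam p \<and> hd (fst p) = u \<and> last (fst p) = v)"

definition temporal_antichain :: "'a set \<Rightarrow> ('a \<times> 'a) set \<Rightarrow> ('a \<times> 'a \<Rightarrow> nat set) \<Rightarrow> 'a set \<Rightarrow> bool" where
  "temporal_antichain V A lam S \<longleftrightarrow> S \<subseteq> V \<and>
     (\<forall>u\<in>S. \<forall>v\<in>S. u \<noteq> v \<longrightarrow> \<not> temporally_connected V A lam u v)"

text \<open>Occupation: the path occupies v_i (1<i<k) at all times t_{i-1}..t_i, v_1 at t_1 and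
v_k at t_{k-1}. A single-vertex path (k = 1) has no time-steps and occupies nothing.
Indices are 0-based below.\<close>

definition occupies :: "'a list \<times> nat list \<Rightarrow> 'a \<Rightarrow> nat \<Rightarrow> bool" where
  "occupies p v t \<longleftrightarrow> (case p of (vs, ts) \<Rightarrow>
     (\<exists>i < length vs. vs ! i = v \<and> length vs \<ge> 2 \<and>
        (if i = 0 then t = ts ! 0
         else if i = length vs - 1 then t = ts ! (length vs - 2)
         else ts ! (i - 1) \<le> t \<and> t \<le> ts ! i)))"

definition temporally_disjoint :: "'a list \<times> nat list \<Rightarrow> 'a list \<times> nat list \<Rightarrow> bool" where
  "temporally_disjoint p q \<longleftrightarrow> (\<forall>v t. \<not> (occupies p v t \<and> occupies q v t))"

definition temporal_path_cover :: "'a set \<Rightarrow> ('a \<times> 'a) set \<Rightarrow> ('a \<times> 'a \<Rightarrow> nat set) \<Rightarrow> ('a list \<times> nat list) set \<Rightarrow> bool" where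
  "temporal_path_cover V A lam P \<longleftrightarrow> (\<forall>p\<in>P. temporal_path V A lam p) \<and>
     (\<Union>p\<in>P. path_vertices p) = V"

definition TD_path_cover :: "'a set \<Rightarrow> ('a \<times> 'a) set \<Rightarrow> ('a \<times> 'a \<Rightarrow> nat set) \<Rightarrow> ('a list \<times> nat list) set \<Rightarrow> bool" where
  "TD_path_cover V A lam P \<longleftrightarrow> temporal_path_cover V A lam P \<and>
     (\<forall>p\<in>P. \<forall>q\<in>P. p \<noteq> q \<longrightarrow> temporally_disjoint p q)"

end

theory Submission
  imports Defs
begin

lemma path_short:
  assumes "temporal_path V A (\<lambda>_. {1::nat}) p" "\<forall>a\<in>A. True"
  shows "card (path_vertices p) \<le> 2"
proof -
  obtain vs ts where p: "p = (vs, ts)" by (cases p)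
  from assms(1) have tp: "length ts + 1 = length vs" "\<forall>i < length ts. ts ! i \<in> {1}" "sorted_wrt (<) ts"
    unfolding temporal_path_def p by auto
  have "length ts \<le> 1"
  proof (rule ccontr)
    assume "\<not> length ts \<le> 1"
    then have "ts ! 0 < ts ! 1" using tp(3) by (simp add: sorted_wrt_iff_nth_less)
    moreover have l0: "0 < length ts" "1 < length ts" using \<open>\<not> length ts \<le> 1\<close> by auto
    moreover have "ts ! 0 = 1" using tp(2) l0(1) by blast
    moreover have "ts ! 1 = 1" using tp(2) l0(2) by blast
    ultimately show False by simp
  qed
  then have "length vs \<le> 2" using tp(1) by simp
  then show ?thesis unfolding path_vertices_def p using card_length[of vs] by simp
qed

lemma cover_bound:
  assumes fin: "finite P" and cov: "temporal_path_cover V A (\<lambda>_. {1::nat}) P"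
    and fV: "finite V"
  shows "card V \<le> 2 * card P"
proof -
  have V: "V = (\<Union>p\<in>P. path_vertices p)" and tp: "\<forall>p\<in>P. temporal_path V A (\<lambda>_. {1}) p"
    using cov unfolding temporal_path_cover_def by auto
  have "card V \<le> (\<Sum>p\<in>P. card (path_vertices p))"
    unfolding V using card_UN_le[OF fin] by blast
  also have "\<dots> \<le> (\<Sum>p\<in>P. 2)"
    by (rule sum_mono) (use tp path_short in blast)
  finally show ?thesis by simp
qed

theorem mainTheorem2:
  fixes M :: nat
  assumes "M \<ge> 1"
  shows "\<exists>(V :: nat set) A lam.
           temporal_DAG V A lam \<and> transitive_tournament V A \<and>
           (\<forall>S. temporal_antichain V A lam S \<longrightarrow> card S \<le> 1) \<and>
           (\<forall>P. finite P \<and> temporal_path_cover V A lam P \<longrightarrow> card P \<ge> M) \<and>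
           (\<forall>P. finite P \<and> TD_path_cover V A lam P \<longrightarrow> card P \<ge> M)"
proof -
  define V :: "nat set" where "V = {..<2*M}"
  define A where "A = {(i,j). i < j \<and> j < 2*M}"
  define lam :: "nat \<times> nat \<Rightarrow> nat set" where "lam = (\<lambda>_. {1})"
  have AV: "A \<subseteq> V \<times> V" unfolding A_def V_def by auto
  have tr: "trans A" unfolding A_def trans_def by auto
  have acyc: "acyclic A"
  proof -
    have "A\<^sup>+ = A" using tr by simp
    then show ?thesis unfolding acyclic_def A_def by auto
  qed
  have dag: "temporal_DAG V A lam"
    unfolding temporal_DAG_def temporal_digraph_def lam_def V_def
    using AV acyc V_def by auto
  have tt: "transitive_tournament V A"
    unfolding transitive_tournament_def using AV tr unfolding A_def V_def by auto
  have conn: "temporally_connected V A lam u v" if "u \<in> V" "v \<in> V" "u < v" for u v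
    unfolding temporally_connected_def
    apply (rule exI[of _ "([u,v],[1])"])
    using that unfolding temporal_path_def lam_def A_def V_def by auto
  have anti: "\<forall>S. temporal_antichain V A lam S \<longrightarrow> card S \<le> 1"
  proof (intro allI impI)
    fix S assume S: "temporal_antichain V A lam S"
    then have SV: "S \<subseteq> V" and nc: "\<forall>u\<in>S. \<forall>v\<in>S. u \<noteq> v \<longrightarrow> \<not> temporally_connected V A lam u v"
      unfolding temporal_antichain_def by auto
    have "finite S" using SV finite_subset unfolding V_def by blast
    moreover have "\<forall>a\<in>S. \<forall>b\<in>S. a = b"
    proof (intro ballI, rule ccontr)
      fix a b assume ab: "a \<in> S" "b \<in> S" "a \<noteq> b"
      show False
      proof (cases "a < b")
        case True
        have "temporally_connected V A lam a b" using conn[of a b] ab(1,2) SV True by (simp add: subset_iff)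
        then show ?thesis using nc ab by metis
      next
        case False then have "b < a" using ab by simp
        have "temporally_connected V A lam b a" using conn[of b a] ab(1,2) SV \<open>b < a\<close> by (simp add: subset_iff)
        then show ?thesis using nc ab by metis
      qed
    qed
    ultimately show "card S \<le> 1" using card_le_Suc0_iff_eq by auto
  qed
  have pc: "\<forall>P. finite P \<and> temporal_path_cover V A lam P \<longrightarrow> card P \<ge> M"
  proof (intro allI impI)
    fix P assume "finite P \<and> temporal_path_cover V A lam P"
    then have "card V \<le> 2 * card P" using cover_bound[of P V A] unfolding lam_def V_def by auto
    then show "card P \<ge> M" unfolding V_def by simp
  qed
  have td: "\<forall>P. finite P \<and> TD_path_cover V A lam P \<longrightarrow> card P \<ge> M"
    using pc unfolding TD_path_cover_def by blast
  show ?thesis using dag tt anti pc td by blast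
qed

end
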